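(* Let $\mu$ be a Borel measure on $\mathbb R$ with $\mu(\mathbb R)=1$, and let $f$ be Lipschitz continuous with $f(0)=f(\alpha)=f(1)=0$, $f<0$ on $(0,\alpha)$, $f>0$ on $(\alpha,1)$ for some $\alpha\in(0,1)$. Let $\hat f$ be a Lipschitz continuous function on $\mathbb R$ with $\hat f>0$ on $(-\infty,0)$, $\hat f=f$ on $[0,1]$, $\hat f<0$ on $(1,+\infty)$. Let $\rho\in C^1(\mathbb R)$ satisfy $\rho=0$ on $(-\infty,0]$, $\rho=1$ on $[1,+\infty)$ and $\rho'>0$ on $(0,1)$. Then for every sufficiently small constant $\varepsilon>0$, the function $\underline u(t,x):=\rho(\varepsilon x-\frac{t}{\varepsilon})-\frac{1-\alpha}{4}$ is a sub-solution and the function $\overline u(t,x):=\rho(\varepsilon x+\frac{t}{\varepsilon}+1)+\frac{\alpha}{4}$ is a super-solution of \[u_t=\mu*u-u+\hat f(u).\]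
   Context: $(\mu*u)(x)=\int_{y\in\mathbb R}u(x-y)\,d\mu(y)$. A sub-solution (resp. super-solution) is a function $u(t,x)$ satisfying $u_t\le\mu*u-u+\hat f(u)$ (resp. $u_t\ge\mu*u-u+\hat f(u)$) for all $t,x\in\mathbb R$. *)

theory Defs
  imports "HOL-Probability.Probability"
begin

definition conv :: "real measure \<Rightarrow> (real \<Rightarrow> real) \<Rightarrow> real \<Rightarrow> real" where
  "conv \<mu> v x = (\<integral>y. v (x - y) \<partial>\<mu>)"

definition subsolution :: "real measure \<Rightarrow> (real \<Rightarrow> real) \<Rightarrow> (real \<Rightarrow> real \<Rightarrow> real) \<Rightarrow> bool" where
  "subsolution \<mu> g u \<longleftrightarrow> (\<forall>t x.
     (\<lambda>s. u s x) differentiable (at t) \<and>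
     integrable \<mu> (\<lambda>y. u t (x - y)) \<and>
     deriv (\<lambda>s. u s x) t \<le> conv \<mu> (u t) x - u t x + g (u t x))"

definition supersolution :: "real measure \<Rightarrow> (real \<Rightarrow> real) \<Rightarrow> (real \<Rightarrow> real \<Rightarrow> real) \<Rightarrow> bool" where
  "supersolution \<mu> g u \<longleftrightarrow> (\<forall>t x.
     (\<lambda>s. u s x) differentiable (at t) \<and>
     integrable \<mu> (\<lambda>y. u t (x - y)) \<and>
     deriv (\<lambda>s. u s x) t \<ge> conv \<mu> (u t) x - u t x + g (u t x))"

end

theory Submission
  imports Defs
begin


lemma bc_integrable:
  fixes g :: "real \<Rightarrow> real"
  assumes P: "prob_space \<mu>" and S: "sets \<mu> = sets borel"
    and gc: "continuous_on UNIV g" and gb: "\<And>y. \<bar>g y\<bar> \<le> C"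
  shows "integrable \<mu> g"
proof -
  interpret prob_space \<mu> by (rule P)
  have "g \<in> borel_measurable borel" using gc by (rule borel_measurable_continuous_onI)
  then have m: "g \<in> borel_measurable \<mu>" by (subst measurable_cong_sets[OF S refl])
  show ?thesis by (rule integrable_const_bound[where B=C]) (use m gb in auto)
qed

lemma conv_err:
  fixes \<rho> :: "real \<Rightarrow> real"
  assumes P: "prob_space \<mu>" and S: "sets \<mu> = sets borel"
    and r01: "\<And>z. 0 \<le> \<rho> z \<and> \<rho> z \<le> 1" and B: "B > 0"
    and lip: "\<And>a b. \<bar>\<rho> a - \<rho> b\<bar> \<le> B * \<bar>a - b\<bar>" and \<eta>: "\<eta> > 0"
  shows "\<exists>\<epsilon>0>0. \<forall>\<epsilon> z. 0 < \<epsilon> \<and> \<epsilon> < \<epsilon>0 \<longrightarrow> \<bar>(\<integral>y. \<rho> (z - \<epsilon> * y) \<partial>\<mu>) - \<rho> z\<bar> \<le> \<eta>"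
proof -
  interpret prob_space \<mu> by (rule P)
  define A where "A = (\<lambda>n::nat. {y::real. real n < \<bar>y\<bar>})"
  have Asets: "A n \<in> sets \<mu>" for n
    unfolding S A_def by (intro borel_open open_Collect_less) (auto intro: continuous_intros)
  have "(\<lambda>n. measure \<mu> (A n)) \<longlonglongrightarrow> measure \<mu> (\<Inter>i. A i)"
    by (rule finite_Lim_measure_decseq) (use Asets in \<open>auto simp: decseq_def A_def\<close>)
  moreover have "(\<Inter>i. A i) = {}"
    proof (auto simp: A_def)
    fix x :: real assume "\<forall>n. real n < \<bar>x\<bar>"
    moreover obtain n where "\<bar>x\<bar> < real n" using reals_Archimedean2 by blast
    ultimately show False by (meson less_asym)
  qed
  ultimately have "(\<lambda>n. measure \<mu> (A n)) \<longlonglongrightarrow> 0" by simp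
  then obtain N where N: "measure \<mu> (A N) < \<eta> / 2"
    using \<eta> by (metis (no_types, lifting) LIMSEQ_D abs_of_nonneg diff_zero half_gt_zero measure_nonneg real_norm_def order_refl)
  define R where "R = real N"
  define \<epsilon>0 where "\<epsilon>0 = \<eta> / (2 * B * (R + 1))"
  have R0: "R \<ge> 0" by (simp add: R_def)
  have e0: "\<epsilon>0 > 0" using \<eta> B R0 by (simp add: \<epsilon>0_def)
  have main: "\<bar>(\<integral>y. \<rho> (z - \<epsilon> * y) \<partial>\<mu>) - \<rho> z\<bar> \<le> \<eta>" if h: "0 < \<epsilon>" "\<epsilon> < \<epsilon>0" for \<epsilon> z
  proof -
    have rc: "continuous_on UNIV \<rho>"
      unfolding continuous_on_iff
    proof (intro ballI allI impI)
      fix x and e :: real assume "0 < e"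
      then show "\<exists>d>0. \<forall>x'\<in>UNIV. dist x' x < d \<longrightarrow> dist (\<rho> x') (\<rho> x) < e"
        using B lip by (intro exI[of _ "e / B"]) (auto simp: dist_real_def field_simps intro: le_less_trans)
    qed
    have i1: "integrable \<mu> (\<lambda>y. \<rho> (z - \<epsilon> * y))"
      by (rule bc_integrable[OF P S, where C=1])
         (use r01 in \<open>auto intro!: continuous_on_compose2[OF rc] continuous_intros\<close>)
    have i2: "integrable \<mu> (\<lambda>y. \<rho> (z - \<epsilon> * y) - \<rho> z)" using i1 by simp
    define h where "h = (\<lambda>y. indicator (A N) y + B * \<epsilon> * R)"
    have ih: "integrable \<mu> h" unfolding h_def using Asets
      by (intro Bochner_Integration.integrable_add integrable_real_indicator) (auto simp: less_top[symmetric])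
    have pw: "norm (\<rho> (z - \<epsilon> * y) - \<rho> z) \<le> h y" for y
    proof (cases "y \<in> A N")
      case True
      have "0 \<le> B * \<epsilon> * R" using B h R0 by simp
      then show ?thesis using True r01[of z] r01[of "z - \<epsilon> * y"]
        by (auto simp: h_def abs_le_iff)
    next
      case False
      then have "\<bar>y\<bar> \<le> R" by (auto simp: A_def R_def)
      have "\<bar>\<rho> (z - \<epsilon> * y) - \<rho> z\<bar> \<le> B * \<bar>\<epsilon> * y\<bar>" using lip[of "z - \<epsilon> * y" z] by simp
      also have "\<dots> = B * \<epsilon> * \<bar>y\<bar>" using h by (simp add: abs_mult)
      also have "\<dots> \<le> B * \<epsilon> * R" using \<open>\<bar>y\<bar> \<le> R\<close> B h by (intro mult_left_mono) auto
      finally show ?thesis using False by (simp add: h_def)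
    qed
    have "\<bar>(\<integral>y. \<rho> (z - \<epsilon> * y) \<partial>\<mu>) - \<rho> z\<bar> = norm (\<integral>y. \<rho> (z - \<epsilon> * y) - \<rho> z \<partial>\<mu>)"
      using i1 by (simp add: prob_space)
    also have "\<dots> \<le> (\<integral>y. h y \<partial>\<mu>)"
      by (rule Bochner_Integration.integral_norm_bound_integral[OF i2 ih]) (rule pw)
    also have "(\<integral>y. h y \<partial>\<mu>) = measure \<mu> (A N) + B * \<epsilon> * R"
      unfolding h_def using Asets[of N]
      by (subst Bochner_Integration.integral_add) (auto simp: prob_space less_top[symmetric] intro!: integrable_real_indicator)
    also have "\<dots> \<le> \<eta>"
    proof -
      have "B * \<epsilon> * R \<le> B * \<epsilon>0 * (R + 1)" using h B R0
        by (intro mult_mono) auto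
      also have "\<dots> = \<eta> / 2"
      proof -
        have "B * (R + 1) \<noteq> 0" using B R0 by simp
        then show ?thesis unfolding \<epsilon>0_def by (simp add: divide_simps)
      qed
      finally show ?thesis using N by linarith
    qed
    finally show ?thesis .
  qed
  show ?thesis using e0 main by blast
qed



locale rhoL =
  fixes \<rho> \<rho>' :: "real \<Rightarrow> real"
  assumes rho_deriv: "\<And>s. (\<rho> has_real_derivative \<rho>' s) (at s)"
    and rho'_cont: "continuous_on UNIV \<rho>'"
    and rho_left: "\<And>s. s \<le> 0 \<Longrightarrow> \<rho> s = 0"
    and rho_right: "\<And>s. 1 \<le> s \<Longrightarrow> \<rho> s = 1"
    and rho'_pos: "\<And>s. 0 < s \<Longrightarrow> s < 1 \<Longrightarrow> \<rho>' s > 0"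
begin

lemma rho_cont: "continuous_on A \<rho>"
  by (meson DERIV_isCont continuous_at_imp_continuous_on rho_deriv)

lemma rho_strict: assumes "0 \<le> a" "a < b" "b \<le> 1" shows "\<rho> a < \<rho> b"
  by (rule DERIV_pos_imp_increasing_open[OF assms(2)])
     (use assms rho_cont in \<open>auto intro!: exI[of _ "\<rho>' _"] rho_deriv rho'_pos\<close>)

lemma rho_range: "0 \<le> \<rho> z \<and> \<rho> z \<le> 1"
proof (cases "z \<le> 0 \<or> 1 \<le> z")
  case True then show ?thesis using rho_left rho_right by auto
next
  case False
  then have "\<rho> 0 < \<rho> z" "\<rho> z < \<rho> 1" using rho_strict[of 0 z] rho_strict[of z 1] by auto
  then show ?thesis using rho_left[of 0] rho_right[of 1] by auto
qed

lemma rho'_zero: assumes "s < 0 \<or> 1 < s" shows "\<rho>' s = 0"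
proof -
  have "((\<lambda>_. \<rho> s) has_real_derivative 0) (at s)" by simp
  moreover have "((\<lambda>_. \<rho> s) has_real_derivative \<rho>' s) (at s)"
  proof (cases "s < 0")
    case True
    show ?thesis
      by (rule has_field_derivative_transform_within_open[OF rho_deriv, of "{..<0}"])
         (use True rho_left in auto)
  next
    case False
    then have "1 < s" using assms by auto
    show ?thesis
      by (rule has_field_derivative_transform_within_open[OF rho_deriv, of "{1<..}"])
         (use \<open>1 < s\<close> rho_right in auto)
  qed
  ultimately show ?thesis using DERIV_unique by blast
qed

lemma rho'_nonneg: "0 \<le> \<rho>' s"
proof -
  consider "s < 0 \<or> 1 < s" | "0 < s \<and> s < 1" | "s = 0" | "s = 1" by linarith
  then show ?thesis
  proof cases
    case 1 then show ?thesis using rho'_zero by simp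
  next
    case 2 then show ?thesis using rho'_pos[of s] by simp
  next
    case 3
    have "(\<rho>' \<longlongrightarrow> \<rho>' 0) (at_right 0)"
      using rho'_cont by (simp add: continuous_on_def filterlim_at_split)
    moreover have "eventually (\<lambda>x. 0 \<le> \<rho>' x) (at_right (0::real))"
      unfolding eventually_at_right[of 0 "1::real", simplified]
      by (intro exI[of _ 1]) (auto intro: less_imp_le rho'_pos)
    ultimately have "0 \<le> \<rho>' 0"
      by (intro tendsto_lowerbound) auto
    then show ?thesis using 3 by simp
  next
    case 4
    have "(\<rho>' \<longlongrightarrow> \<rho>' 1) (at_left 1)"
      using rho'_cont by (simp add: continuous_on_def filterlim_at_split)
    moreover have "eventually (\<lambda>x. 0 \<le> \<rho>' x) (at_left (1::real))"
      unfolding eventually_at_left[of 0 "1::real", simplified]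
      by (intro exI[of _ 0]) (auto intro: less_imp_le rho'_pos)
    ultimately have "0 \<le> \<rho>' 1"
      by (intro tendsto_lowerbound) auto
    then show ?thesis using 4 by simp
  qed
qed

lemma rho'_bound: "\<exists>B>0. \<forall>s. \<bar>\<rho>' s\<bar> \<le> B"
proof -
  have "compact (\<rho>' ` {0..1})"
    by (rule compact_continuous_image) (use rho'_cont continuous_on_subset in auto)
  then obtain B0 where B0: "\<forall>y\<in>\<rho>' ` {0..1}. norm y \<le> B0"
    using compact_imp_bounded bounded_iff by metis
  show ?thesis
  proof (intro exI[of _ "\<bar>B0\<bar> + 1"] conjI allI)
    fix s
    show "\<bar>\<rho>' s\<bar> \<le> \<bar>B0\<bar> + 1"
    proof (cases "s < 0 \<or> 1 < s")
      case True then show ?thesis using rho'_zero by simp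
    next
      case False then have "\<bar>\<rho>' s\<bar> \<le> B0" using B0 by force
      then show ?thesis by simp
    qed
  qed simp
qed

lemma rho_lip: "\<exists>B>0. \<forall>a b. \<bar>\<rho> a - \<rho> b\<bar> \<le> B * \<bar>a - b\<bar>"
proof -
  obtain B where B: "B > 0" "\<And>s. \<bar>\<rho>' s\<bar> \<le> B" using rho'_bound by blast
  have *: "\<bar>\<rho> a - \<rho> b\<bar> \<le> B * \<bar>a - b\<bar>" if ba: "b < a" for a b
  proof -
    obtain z where "\<rho> a - \<rho> b = (a - b) * \<rho>' z"
      using MVT2[OF ba, of \<rho> \<rho>'] rho_deriv by (metis mult.commute)
    then have "\<bar>\<rho> a - \<rho> b\<bar> = \<bar>a - b\<bar> * \<bar>\<rho>' z\<bar>" by (simp add: abs_mult)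
    also have "\<dots> \<le> \<bar>a - b\<bar> * B" by (intro mult_left_mono B) auto
    finally show ?thesis by (simp add: mult.commute)
  qed
  have "\<bar>\<rho> a - \<rho> b\<bar> \<le> B * \<bar>a - b\<bar>" for a b
    using *[of a b] *[of b a] by (cases a b rule: linorder_cases) (auto simp: abs_minus_commute)
  then show ?thesis using B by blast
qed


lemma core:
  assumes d: "0 < d" "d < 1/2" and phic: "continuous_on {0..1} \<phi>"
    and p1: "\<And>v. 0 \<le> v \<Longrightarrow> v \<le> d \<Longrightarrow> \<phi> v > 0"
    and p2: "\<And>v. 1 - d \<le> v \<Longrightarrow> v \<le> 1 \<Longrightarrow> \<phi> v > 0"
  shows "\<exists>\<eta>>0. \<exists>\<epsilon>1>0. \<forall>\<epsilon> z e. 0 < \<epsilon> \<and> \<epsilon> < \<epsilon>1 \<and> \<bar>e\<bar> \<le> \<eta> \<longrightarrow> 0 \<le> \<rho>' z / \<epsilon> + e + \<phi> (\<rho> z)"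
proof -
  obtain a1 where a1: "a1 \<in> {0..d}" "\<forall>y\<in>{0..d}. \<phi> a1 \<le> \<phi> y"
    using continuous_attains_inf[of "{0..d}" \<phi>] continuous_on_subset[OF phic, of "{0..d}"] d by auto
  obtain a2 where a2: "a2 \<in> {1-d..1}" "\<forall>y\<in>{1-d..1}. \<phi> a2 \<le> \<phi> y"
    using continuous_attains_inf[of "{1-d..1}" \<phi>] continuous_on_subset[OF phic, of "{1-d..1}"] d by auto
  define c where "c = min (\<phi> a1) (\<phi> a2)"
  have c: "c > 0" using a1 a2 p1 p2 by (auto simp: c_def)
  have "compact (\<phi> ` {0..1})"
    by (rule compact_continuous_image[OF phic]) simp
  then obtain M where M: "\<forall>y\<in>\<phi> ` {0..1}. norm y \<le> M"
    using compact_imp_bounded bounded_iff by metis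
  define K where "K = {z\<in>{0..1}. d \<le> \<rho> z \<and> \<rho> z \<le> 1 - d}"
  have Kc: "compact K"
  proof -
    have "closed K" unfolding K_def
      using rho_cont[of UNIV] closed_atLeastAtMost[of 0 "1::real"]
      by (intro closed_Collect_conj closed_Collect_le continuous_on_const) (auto simp: atLeastAtMost_def atLeast_def atMost_def Int_def)
    moreover have "bounded K" unfolding K_def by (rule bounded_subset[of "{0..1}"]) auto
    ultimately show ?thesis using compact_eq_bounded_closed by blast
  qed
  have Kin: "0 < z \<and> z < 1" if "z \<in> K" for z
  proof -
    have "z \<noteq> 0" "z \<noteq> 1" using that d rho_left[of 0] rho_right[of 1] by (auto simp: K_def)
    then show ?thesis using that by (auto simp: K_def)
  qed
  obtain m where m: "m > 0" "\<And>z. z \<in> K \<Longrightarrow> m \<le> \<rho>' z"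
  proof (cases "K = {}")
    case True then show ?thesis using that[of 1] by auto
  next
    case False
    then obtain a where a: "a \<in> K" "\<forall>y\<in>K. \<rho>' a \<le> \<rho>' y"
      using continuous_attains_inf[OF Kc False, of \<rho>'] rho'_cont continuous_on_subset by blast
    show ?thesis using that[of "\<rho>' a"] a Kin[OF a(1)] rho'_pos by auto
  qed
  define \<eta> where "\<eta> = c / 2"
  define \<epsilon>1 where "\<epsilon>1 = m / (\<eta> + \<bar>M\<bar> + 1)"
  have \<eta>: "\<eta> > 0" using c by (simp add: \<eta>_def)
  have \<epsilon>1: "\<epsilon>1 > 0" using m \<eta> by (simp add: \<epsilon>1_def)
  have main: "0 \<le> \<rho>' z / \<epsilon> + e + \<phi> (\<rho> z)" if h: "0 < \<epsilon>" "\<epsilon> < \<epsilon>1" "\<bar>e\<bar> \<le> \<eta>" for \<epsilon> z e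
  proof -
    have r: "0 \<le> \<rho> z" "\<rho> z \<le> 1" using rho_range by auto
    have q: "0 \<le> \<rho>' z / \<epsilon>" using rho'_nonneg h by simp
    have phM: "\<bar>\<phi> (\<rho> z)\<bar> \<le> M" using M r by auto
    consider "\<rho> z \<le> d" | "1 - d \<le> \<rho> z" | "d < \<rho> z \<and> \<rho> z < 1 - d" by linarith
    then show ?thesis
    proof cases
      case 1
      then have "\<phi> a1 \<le> \<phi> (\<rho> z)" using a1 r by auto
      then have "c \<le> \<phi> (\<rho> z)" by (auto simp: c_def)
      then show ?thesis using q h \<eta>_def by linarith
    next
      case 2
      then have "\<phi> a2 \<le> \<phi> (\<rho> z)" using a2 r by auto
      then have "c \<le> \<phi> (\<rho> z)" by (auto simp: c_def)
      then show ?thesis using q h \<eta>_def by linarith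
    next
      case 3
      have "z \<in> {0..1}"
      proof (rule ccontr)
        assume "z \<notin> {0..1}"
        then have "\<rho> z = 0 \<or> \<rho> z = 1" using rho_left rho_right by force
        then show False using 3 d by auto
      qed
      then have "z \<in> K" using 3 by (auto simp: K_def)
      then have mz: "m \<le> \<rho>' z" using m by auto
      have "\<epsilon> * (\<eta> + \<bar>M\<bar> + 1) < m"
        using h \<eta> unfolding \<epsilon>1_def by (simp add: pos_less_divide_eq[symmetric] field_simps)
      then have "\<eta> + \<bar>M\<bar> + 1 < m / \<epsilon>" using h by (simp add: field_simps)
      also have "m / \<epsilon> \<le> \<rho>' z / \<epsilon>" using mz h by (simp add: divide_right_mono)
      finally show ?thesis using h phM by linarith
    qed
  qed
  show ?thesis using \<eta> \<epsilon>1 main by blast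
qed

end


theorem lemma12:
  fixes \<mu> :: "real measure" and f fh \<rho> \<rho>' :: "real \<Rightarrow> real" and \<alpha> :: real
  assumes mu_borel: "sets \<mu> = sets borel"
    and mu_prob: "emeasure \<mu> (space \<mu>) = 1"
    and alpha: "0 < \<alpha>" "\<alpha> < 1"
    and f_lip: "\<exists>L. L-lipschitz_on {0..1} f"
    and f_zeros: "f 0 = 0" "f \<alpha> = 0" "f 1 = 0"
    and f_neg: "\<And>s. 0 < s \<Longrightarrow> s < \<alpha> \<Longrightarrow> f s < 0"
    and f_pos: "\<And>s. \<alpha> < s \<Longrightarrow> s < 1 \<Longrightarrow> f s > 0"
    and fh_lip: "\<exists>L. L-lipschitz_on UNIV fh"
    and fh_neg_side: "\<And>s. s < 0 \<Longrightarrow> fh s > 0"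
    and fh_eq: "\<And>s. 0 \<le> s \<Longrightarrow> s \<le> 1 \<Longrightarrow> fh s = f s"
    and fh_pos_side: "\<And>s. 1 < s \<Longrightarrow> fh s < 0"
    and rho_deriv: "\<And>s. (\<rho> has_real_derivative \<rho>' s) (at s)"
    and rho'_cont: "continuous_on UNIV \<rho>'"
    and rho_left: "\<And>s. s \<le> 0 \<Longrightarrow> \<rho> s = 0"
    and rho_right: "\<And>s. 1 \<le> s \<Longrightarrow> \<rho> s = 1"
    and rho'_pos: "\<And>s. 0 < s \<Longrightarrow> s < 1 \<Longrightarrow> \<rho>' s > 0"
  shows "\<exists>\<epsilon>0>0. \<forall>\<epsilon>. 0 < \<epsilon> \<and> \<epsilon> < \<epsilon>0 \<longrightarrow>
           subsolution \<mu> fh (\<lambda>t x. \<rho> (\<epsilon> * x - t / \<epsilon>) - (1 - \<alpha>) / 4) \<and>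
           supersolution \<mu> fh (\<lambda>t x. \<rho> (\<epsilon> * x + t / \<epsilon> + 1) + \<alpha> / 4)"
  proof -
  interpret rhoL \<rho> \<rho>'
    by unfold_locales (use rho_deriv rho'_cont rho_left rho_right rho'_pos in auto)
  have P: "prob_space \<mu>" using mu_prob by (rule prob_spaceI)
  obtain L where L: "L-lipschitz_on UNIV fh" using fh_lip by blast
  have fhc: "continuous_on A fh" for A
    using lipschitz_on_continuous_on[OF L] continuous_on_subset by blast
  obtain B where B: "B > 0" "\<And>a b. \<bar>\<rho> a - \<rho> b\<bar> \<le> B * \<bar>a - b\<bar>" using rho_lip by blast
  define c where "c = (1 - \<alpha>) / 4"
  define a where "a = \<alpha> / 4"
  obtain \<eta>1 e1 where E1: "\<eta>1 > 0" "e1 > 0"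
    "\<And>\<epsilon> z e. 0 < \<epsilon> \<Longrightarrow> \<epsilon> < e1 \<Longrightarrow> \<bar>e\<bar> \<le> \<eta>1 \<Longrightarrow> 0 \<le> \<rho>' z / \<epsilon> + e + fh (\<rho> z - c)"
  proof -
    have "\<exists>\<eta>>0. \<exists>\<epsilon>1>0. \<forall>\<epsilon> z e. 0 < \<epsilon> \<and> \<epsilon> < \<epsilon>1 \<and> \<bar>e\<bar> \<le> \<eta> \<longrightarrow> 0 \<le> \<rho>' z / \<epsilon> + e + (\<lambda>v. fh (v - c)) (\<rho> z)"
    proof (rule core[where d = "(1 - \<alpha>) / 8"])
      show "continuous_on {0..1} (\<lambda>v. fh (v - c))"
        by (rule continuous_on_compose2[OF fhc[of UNIV]]) (auto intro: continuous_intros)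
      show "fh (v - c) > 0" if "0 \<le> v" "v \<le> (1 - \<alpha>) / 8" for v
        using that alpha by (intro fh_neg_side) (simp add: c_def)
      show "fh (v - c) > 0" if "1 - (1 - \<alpha>) / 8 \<le> v" "v \<le> 1" for v
      proof -
        have h1: "\<alpha> < v - c" using that alpha unfolding c_def by (auto simp: field_simps)
        have "v - c < 1" using that alpha unfolding c_def by (auto simp: field_simps)
        then show ?thesis using fh_eq[of "v - c"] f_pos[of "v - c"] alpha h1 by simp
      qed
    qed (use alpha in auto)
    then show ?thesis using that by blast
  qed
  obtain \<eta>2 e2 where E2: "\<eta>2 > 0" "e2 > 0"
    "\<And>\<epsilon> z e. 0 < \<epsilon> \<Longrightarrow> \<epsilon> < e2 \<Longrightarrow> \<bar>e\<bar> \<le> \<eta>2 \<Longrightarrow> 0 \<le> \<rho>' z / \<epsilon> + e + - fh (\<rho> z + a)"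
  proof -
    have "\<exists>\<eta>>0. \<exists>\<epsilon>1>0. \<forall>\<epsilon> z e. 0 < \<epsilon> \<and> \<epsilon> < \<epsilon>1 \<and> \<bar>e\<bar> \<le> \<eta> \<longrightarrow> 0 \<le> \<rho>' z / \<epsilon> + e + (\<lambda>v. - fh (v + a)) (\<rho> z)"
    proof (rule core[where d = "\<alpha> / 8"])
      show "continuous_on {0..1} (\<lambda>v. - fh (v + a))"
        by (intro continuous_on_minus continuous_on_compose2[OF fhc[of UNIV]]) (auto intro: continuous_intros)
      show "- fh (v + a) > 0" if "0 \<le> v" "v \<le> \<alpha> / 8" for v
      proof -
        have "0 < v + a" using that alpha unfolding a_def by linarith
        have "v + a < \<alpha>" using that alpha unfolding a_def by linarith
        then show ?thesis using fh_eq[of "v + a"] f_neg[of "v + a"] alpha \<open>0 < v + a\<close> by simp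
      qed
      show "- fh (v + a) > 0" if "1 - \<alpha> / 8 \<le> v" "v \<le> 1" for v
        using that alpha by (simp add: a_def fh_pos_side)
    qed (use alpha in auto)
    then show ?thesis using that by blast
  qed
  obtain e3 where E3: "e3 > 0"
    "\<And>\<epsilon> z. 0 < \<epsilon> \<Longrightarrow> \<epsilon> < e3 \<Longrightarrow> \<bar>(\<integral>y. \<rho> (z - \<epsilon> * y) \<partial>\<mu>) - \<rho> z\<bar> \<le> min \<eta>1 \<eta>2"
    using conv_err[OF P mu_borel _ B, of "min \<eta>1 \<eta>2"] rho_range E1(1) E2(1) by auto
  have rc: "continuous_on UNIV \<rho>" by (rule rho_cont)
  have integ: "integrable \<mu> (\<lambda>y. \<rho> (z - \<epsilon> * y) + k)" for z \<epsilon> k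
    by (rule bc_integrable[OF P mu_borel, where C="1 + \<bar>k\<bar>"])
       (use rho_range in \<open>auto intro!: continuous_on_compose2[OF rc] continuous_intros simp: abs_le_iff\<close>,
        (smt (verit) rho_range)+)
  have convEq: "(\<integral>y. \<rho> (z - \<epsilon> * y) + k \<partial>\<mu>) = (\<integral>y. \<rho> (z - \<epsilon> * y) \<partial>\<mu>) + k" for z \<epsilon> k
  proof -
    have "(\<integral>y. \<rho> (z - \<epsilon> * y) + k \<partial>\<mu>) = (\<integral>y. \<rho> (z - \<epsilon> * y) \<partial>\<mu>) + (\<integral>y. k \<partial>\<mu>)"
      using integ[of z \<epsilon> 0] prob_space.finite_measure[OF P] by (intro Bochner_Integration.integral_add) (auto intro: finite_measure.integrable_const)
    then show ?thesis using prob_space.prob_space[OF P] by simp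
  qed
  have diffI: "f differentiable (at t)" if "(f has_real_derivative D) (at t)" for f :: "real \<Rightarrow> real" and D t
    using has_field_derivative_imp_has_derivative[OF that] unfolding differentiable_def by blast
  show ?thesis
  proof (intro exI[of _ "min e1 (min e2 e3)"] conjI allI impI)
    show "0 < min e1 (min e2 e3)" using E1 E2 E3 by simp
    fix \<epsilon> assume he: "0 < \<epsilon> \<and> \<epsilon> < min e1 (min e2 e3)"
    then have he1: "0 < \<epsilon>" "\<epsilon> < e1" "\<epsilon> < e2" "\<epsilon> < e3" by auto
    show "subsolution \<mu> fh (\<lambda>t x. \<rho> (\<epsilon> * x - t / \<epsilon>) - (1 - \<alpha>) / 4)"
      unfolding subsolution_def c_def[symmetric]
    proof (intro allI conjI)
      fix t x
      define z where "z = \<epsilon> * x - t / \<epsilon>"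
      have d1: "((\<lambda>s. \<epsilon> * x - s / \<epsilon>) has_real_derivative (- 1 / \<epsilon>)) (at t)"
        using he1(1) by (auto intro!: derivative_eq_intros)
      have D: "((\<lambda>s. \<rho> (\<epsilon> * x - s / \<epsilon>) - c) has_real_derivative (\<rho>' z * (- 1 / \<epsilon>))) (at t)"
        using DERIV_diff[OF DERIV_chain2[OF rho_deriv d1] DERIV_const[of c]] by (simp add: z_def)
      show "(\<lambda>s. \<rho> (\<epsilon> * x - s / \<epsilon>) - c) differentiable (at t)" by (rule diffI[OF D])
      have eqf: "(\<lambda>y. \<rho> (\<epsilon> * (x - y) - t / \<epsilon>) - c) = (\<lambda>y. \<rho> (z - \<epsilon> * y) + (- c))"
        by (auto simp: z_def algebra_simps)
      show "integrable \<mu> (\<lambda>y. \<rho> (\<epsilon> * (x - y) - t / \<epsilon>) - c)"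
        unfolding eqf by (rule integ)
      have cv: "conv \<mu> (\<lambda>x. \<rho> (\<epsilon> * x - t / \<epsilon>) - c) x = (\<integral>y. \<rho> (z - \<epsilon> * y) \<partial>\<mu>) - c"
        unfolding conv_def eqf convEq by simp
      have dv: "deriv (\<lambda>s. \<rho> (\<epsilon> * x - s / \<epsilon>) - c) t = - (\<rho>' z / \<epsilon>)"
        using DERIV_imp_deriv[OF D] by simp
      have "0 \<le> \<rho>' z / \<epsilon> + ((\<integral>y. \<rho> (z - \<epsilon> * y) \<partial>\<mu>) - \<rho> z) + fh (\<rho> z - c)"
        using E1(3)[OF he1(1,2)] E3(2)[OF he1(1,4), of z] by auto
      then show "deriv (\<lambda>s. \<rho> (\<epsilon> * x - s / \<epsilon>) - c) t
          \<le> conv \<mu> (\<lambda>x. \<rho> (\<epsilon> * x - t / \<epsilon>) - c) x - (\<rho> (\<epsilon> * x - t / \<epsilon>) - c) + fh (\<rho> (\<epsilon> * x - t / \<epsilon>) - c)"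
        unfolding cv dv z_def[symmetric] by linarith
    qed
    show "supersolution \<mu> fh (\<lambda>t x. \<rho> (\<epsilon> * x + t / \<epsilon> + 1) + \<alpha> / 4)"
      unfolding supersolution_def a_def[symmetric]
    proof (intro allI conjI)
      fix t x
      define z where "z = \<epsilon> * x + t / \<epsilon> + 1"
      have d1: "((\<lambda>s. \<epsilon> * x + s / \<epsilon> + 1) has_real_derivative (1 / \<epsilon>)) (at t)"
        using he1(1) by (auto intro!: derivative_eq_intros)
      have D: "((\<lambda>s. \<rho> (\<epsilon> * x + s / \<epsilon> + 1) + a) has_real_derivative (\<rho>' z * (1 / \<epsilon>))) (at t)"
        using DERIV_add[OF DERIV_chain2[OF rho_deriv d1] DERIV_const[of a]] by (simp add: z_def)
      show "(\<lambda>s. \<rho> (\<epsilon> * x + s / \<epsilon> + 1) + a) differentiable (at t)" by (rule diffI[OF D])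
      have eqf: "(\<lambda>y. \<rho> (\<epsilon> * (x - y) + t / \<epsilon> + 1) + a) = (\<lambda>y. \<rho> (z - \<epsilon> * y) + a)"
        by (auto simp: z_def algebra_simps)
      show "integrable \<mu> (\<lambda>y. \<rho> (\<epsilon> * (x - y) + t / \<epsilon> + 1) + a)"
        unfolding eqf by (rule integ)
      have cv: "conv \<mu> (\<lambda>x. \<rho> (\<epsilon> * x + t / \<epsilon> + 1) + a) x = (\<integral>y. \<rho> (z - \<epsilon> * y) \<partial>\<mu>) + a"
        unfolding conv_def eqf convEq by simp
      have dv: "deriv (\<lambda>s. \<rho> (\<epsilon> * x + s / \<epsilon> + 1) + a) t = \<rho>' z / \<epsilon>"
        using DERIV_imp_deriv[OF D] by simp
      have "0 \<le> \<rho>' z / \<epsilon> + (- ((\<integral>y. \<rho> (z - \<epsilon> * y) \<partial>\<mu>) - \<rho> z)) + - fh (\<rho> z + a)"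
        using E2(3)[OF he1(1,3)] E3(2)[OF he1(1,4), of z] by auto
      then show "conv \<mu> (\<lambda>x. \<rho> (\<epsilon> * x + t / \<epsilon> + 1) + a) x - (\<rho> (\<epsilon> * x + t / \<epsilon> + 1) + a) + fh (\<rho> (\<epsilon> * x + t / \<epsilon> + 1) + a)
          \<le> deriv (\<lambda>s. \<rho> (\<epsilon> * x + s / \<epsilon> + 1) + a) t"
        unfolding cv dv z_def[symmetric] by linarith
    qed
  qed
qed

end
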